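(* Let $G$ be a simple undirected graph with vertices $v_1,\dots,v_n$ and let $G^d$ be a digraph whose underlying undirected graph is $G$ (an orientation of each edge of $G$), with edges $e_1,\dots,e_m$. Then the ideal $I(E)_{G^d}$ is generated by the binomials $f_C$, where $C$ ranges over the cycles of $G$.
   Context: $K$ is a field of characteristic zero; $[v_i,v_j]$ is the directed edge from $v_i$ to $v_j$. $I(E)_{G^d}=I(G^d,E)\cap K[e_1,\dots,e_m]$, where $I(G^d,E)\subseteq K[e_1,\dots,e_m,v_1,\dots,v_n,z_1,\dots,z_n]$ is generated by $e_h-z_iv_j$ for each edge $e_h=[v_i,v_j]$ of $G^d$ and $z_iv_i-1$, $i=1,\dots,n$. For a cycle $C$ of $G$ with vertices $v_{i(1)},\dots,v_{i(q)}$ (distinct) and edges $e_{h_1},\dots,e_{h_q}$, $e_{h_k}$ joining $v_{i(k)}$ and $v_{i(k+1)}$ ($v_{i(q+1)}=v_{i(1)}$), let $I$ be the set of $h_k$ with $e_{h_k}=[v_{i(k)},v_{i(k+1)}]$ in $G^d$ and $J$ the remaining indices; $f_C=\prod_{h\in I}e_h-\prod_{h\in J}e_h$ (empty product $=1$). *)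

theory Defs
  imports Main "HOL-Library.Poly_Mapping"
begin

(* Variables of the big polynomial ring K[e_1..e_m, v_1..v_n, z_1..z_n] *)
datatype var = EV nat | VV nat | ZV nat

type_synonym 'k mpoly = "(var \<Rightarrow>\<^sub>0 nat) \<Rightarrow>\<^sub>0 'k"

definition Var :: "var \<Rightarrow> 'k::comm_ring_1 mpoly" where
  "Var x = Poly_Mapping.single (Poly_Mapping.single x 1) 1"

definition Ering :: "nat \<Rightarrow> 'k::comm_ring_1 mpoly set" where
  "Ering m = {p::'k mpoly. \<forall>mon \<in> Poly_Mapping.keys p. \<forall>x \<in> Poly_Mapping.keys mon. \<exists>h \<in> {1..m}. x = EV h}"

definition ideal_gen :: "'a::comm_ring_1 set \<Rightarrow> 'a set \<Rightarrow> 'a set" where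
  "ideal_gen R S = {p. \<exists>F r. finite F \<and> F \<subseteq> S \<and> (\<forall>s\<in>F. r s \<in> R) \<and> p = (\<Sum>s\<in>F. r s * s)}"

(* The digraph G^d: vertices 1..n, edges 1..m, edge h = [v_(src h), v_(tgt h)].
   Its underlying graph G is simple: no loops, no two edges joining the same pair. *)
definition simple_orientation :: "nat \<Rightarrow> nat \<Rightarrow> (nat \<Rightarrow> nat) \<Rightarrow> (nat \<Rightarrow> nat) \<Rightarrow> bool" where
  "simple_orientation n m src tgt \<longleftrightarrow>
     (\<forall>h \<in> {1..m}. src h \<in> {1..n} \<and> tgt h \<in> {1..n} \<and> src h \<noteq> tgt h) \<and>
     (\<forall>h \<in> {1..m}. \<forall>h' \<in> {1..m}. {src h, tgt h} = {src h', tgt h'} \<longrightarrow> h = h')"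

definition toric_gens :: "nat \<Rightarrow> nat \<Rightarrow> (nat \<Rightarrow> nat) \<Rightarrow> (nat \<Rightarrow> nat) \<Rightarrow> 'k::comm_ring_1 mpoly set" where
  "toric_gens n m src tgt =
     {Var (EV h) - Var (ZV (src h)) * Var (VV (tgt h)) | h. h \<in> {1..m}} \<union>
     {Var (ZV i) * Var (VV i) - 1 | i. i \<in> {1..n}}"

definition IE :: "nat \<Rightarrow> nat \<Rightarrow> (nat \<Rightarrow> nat) \<Rightarrow> (nat \<Rightarrow> nat) \<Rightarrow> 'k::comm_ring_1 mpoly set" where
  "IE n m src tgt = ideal_gen UNIV (toric_gens n m src tgt) \<inter> Ering m"

definition is_cycle :: "nat \<Rightarrow> nat \<Rightarrow> (nat \<Rightarrow> nat) \<Rightarrow> (nat \<Rightarrow> nat) \<Rightarrow> nat list \<Rightarrow> nat list \<Rightarrow> bool" where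
  "is_cycle n m src tgt vs es \<longleftrightarrow>
     length es = length vs \<and> 3 \<le> length vs \<and> distinct vs \<and> set vs \<subseteq> {1..n} \<and>
     (\<forall>k < length vs. es ! k \<in> {1..m} \<and>
        {src (es ! k), tgt (es ! k)} = {vs ! k, vs ! ((k + 1) mod length vs)})"

definition fC :: "(nat \<Rightarrow> nat) \<Rightarrow> (nat \<Rightarrow> nat) \<Rightarrow> nat list \<Rightarrow> nat list \<Rightarrow> 'k::comm_ring_1 mpoly" where
  "fC src tgt vs es =
     (let q = length vs;
          I = {k. k < q \<and> src (es ! k) = vs ! k \<and> tgt (es ! k) = vs ! ((k + 1) mod q)};
          J = {k. k < q} - I
      in (\<Prod>k\<in>I. Var (EV (es ! k))) - (\<Prod>k\<in>J. Var (EV (es ! k))))"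

end

theory Submission
  imports Defs
begin


definition sr :: "'a::comm_ring_1 set \<Rightarrow> bool" where
  "sr R \<longleftrightarrow> 0 \<in> R \<and> 1 \<in> R \<and> -1 \<in> R \<and> (\<forall>x\<in>R. \<forall>y\<in>R. x + y \<in> R \<and> x * y \<in> R)"

lemma igI: "finite F \<Longrightarrow> F \<subseteq> S \<Longrightarrow> (\<forall>s\<in>F. r s \<in> R) \<Longrightarrow> p = (\<Sum>s\<in>F. r s * s) \<Longrightarrow> p \<in> ideal_gen R S"
  unfolding ideal_gen_def by blast

lemma ig_zero: "0 \<in> ideal_gen R S"
  unfolding ideal_gen_def by (rule CollectI, rule exI[of _ "{}"]) auto

lemma ig_gen: "s \<in> S \<Longrightarrow> 1 \<in> R \<Longrightarrow> s \<in> ideal_gen R S"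
  unfolding ideal_gen_def by (rule CollectI, rule exI[of _ "{s}"], rule exI[of _ "\<lambda>_. 1"]) auto

lemma ig_add:
  assumes R: "sr R" and p: "p \<in> ideal_gen R S" and q: "q \<in> ideal_gen R S"
  shows "p + q \<in> ideal_gen R S"
proof -
  from p obtain F r where F: "finite F" "F \<subseteq> S" "\<forall>s\<in>F. r s \<in> R" "p = (\<Sum>s\<in>F. r s * s)"
    unfolding ideal_gen_def by blast
  from q obtain G r' where G: "finite G" "G \<subseteq> S" "\<forall>s\<in>G. r' s \<in> R" "q = (\<Sum>s\<in>G. r' s * s)"
    unfolding ideal_gen_def by blast
  define r'' where "r'' s = (if s \<in> F then r s else 0) + (if s \<in> G then r' s else 0)" for s
  have "(\<Sum>s\<in>F \<union> G. r'' s * s) = (\<Sum>s\<in>F \<union> G. (if s \<in> F then r s else 0) * s) + (\<Sum>s\<in>F \<union> G. (if s \<in> G then r' s else 0) * s)"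
    unfolding r''_def by (simp add: distrib_right sum.distrib)
  also have "(\<Sum>s\<in>F \<union> G. (if s \<in> F then r s else 0) * s) = (\<Sum>s\<in>F. r s * s)"
    by (rule sum.mono_neutral_cong_right) (use F G in auto)
  also have "(\<Sum>s\<in>F \<union> G. (if s \<in> G then r' s else 0) * s) = (\<Sum>s\<in>G. r' s * s)"
    by (rule sum.mono_neutral_cong_right) (use F G in auto)
  finally have eq: "p + q = (\<Sum>s\<in>F \<union> G. r'' s * s)" using F G by simp
  have "\<forall>s\<in>F \<union> G. r'' s \<in> R" using R F G unfolding r''_def sr_def by auto
  then show ?thesis using eq F G by (intro igI[of "F \<union> G" _ r'']) auto
qed

lemma ig_mult:
  assumes R: "sr R" and c: "c \<in> R" and p: "p \<in> ideal_gen R S"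
  shows "c * p \<in> ideal_gen R S"
proof -
  from p obtain F r where F: "finite F" "F \<subseteq> S" "\<forall>s\<in>F. r s \<in> R" "p = (\<Sum>s\<in>F. r s * s)"
    unfolding ideal_gen_def by blast
  have "c * p = (\<Sum>s\<in>F. (c * r s) * s)" using F by (simp add: sum_distrib_left mult.assoc)
  moreover have "\<forall>s\<in>F. c * r s \<in> R" using R F c unfolding sr_def by auto
  ultimately show ?thesis using F by (intro igI[of F _ "\<lambda>s. c * r s"]) auto
qed

lemma ig_uminus:
  assumes R: "sr R" and p: "p \<in> ideal_gen R S"
  shows "- p \<in> ideal_gen R S"
  using ig_mult[OF R _ p, of "-1"] R unfolding sr_def by simp

lemma ig_diff:
  assumes R: "sr R" and p: "p \<in> ideal_gen R S" and q: "q \<in> ideal_gen R S"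
  shows "p - q \<in> ideal_gen R S"
  using ig_add[OF R p ig_uminus[OF R q]] by simp

lemma ig_sum:
  assumes R: "sr R" and "finite F" and "\<And>x. x \<in> F \<Longrightarrow> g x \<in> ideal_gen R S"
  shows "(\<Sum>x\<in>F. g x) \<in> ideal_gen R S"
  using assms(2,3) by (induction F rule: finite_induct) (auto intro: ig_zero ig_add[OF R])

lemma sr_UNIV: "sr UNIV" unfolding sr_def by auto

lemma Ering_iff: "(p::'k::comm_ring_1 mpoly) \<in> Ering m \<longleftrightarrow> (\<forall>mon\<in>Poly_Mapping.keys p. Poly_Mapping.keys mon \<subseteq> EV ` {1..m})"
  unfolding Ering_def by blast

lemma sr_Ering: "sr (Ering m :: 'k::comm_ring_1 mpoly set)"
proof -
  have add: "p + q \<in> Ering m" if "p \<in> Ering m" "q \<in> Ering m" for p q :: "'k mpoly"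
  proof -
    { fix mon assume "mon \<in> Poly_Mapping.keys (p + q)"
      then have "mon \<in> Poly_Mapping.keys p \<or> mon \<in> Poly_Mapping.keys q" using keys_add[of p q] by blast
      then have "Poly_Mapping.keys mon \<subseteq> EV ` {1..m}" using that unfolding Ering_iff by blast }
    then show ?thesis unfolding Ering_iff by blast
  qed
  have mul: "p * q \<in> Ering m" if "p \<in> Ering m" "q \<in> Ering m" for p q :: "'k mpoly"
  proof -
    { fix mon assume "mon \<in> Poly_Mapping.keys (p * q)"
      then obtain a b where ab: "mon = a + b" "a \<in> Poly_Mapping.keys p" "b \<in> Poly_Mapping.keys q" using keys_mult by blast
      have "Poly_Mapping.keys a \<subseteq> EV ` {1..m}" using that(1) ab(2) unfolding Ering_iff by blast
      moreover have "Poly_Mapping.keys b \<subseteq> EV ` {1..m}" using that(2) ab(3) unfolding Ering_iff by blast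
      ultimately have "Poly_Mapping.keys mon \<subseteq> EV ` {1..m}" using keys_add[of a b] ab(1) by blast }
    then show ?thesis unfolding Ering_iff by blast
  qed
  have "1 \<in> (Ering m :: 'k mpoly set)" unfolding Ering_iff by simp
  moreover have "-1 \<in> (Ering m :: 'k mpoly set)" unfolding Ering_iff by simp
  moreover have "0 \<in> (Ering m :: 'k mpoly set)" unfolding Ering_iff by simp
  ultimately show ?thesis unfolding sr_def using add mul by blast
qed

lemma const_Ering: "Poly_Mapping.single 0 c \<in> Ering m"
  unfolding Ering_iff by simp

lemma Var_Ering: "h \<in> {1..m} \<Longrightarrow> Var (EV h) \<in> Ering m"
  unfolding Ering_iff Var_def by simp

lemma prod_Ering: "finite F \<Longrightarrow> (\<And>x. x \<in> F \<Longrightarrow> g x \<in> Ering m) \<Longrightarrow> (\<Prod>x\<in>F. g x) \<in> (Ering m :: 'k::comm_ring_1 mpoly set)"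
  by (induction F rule: finite_induct) (use sr_Ering[where 'k='k] in \<open>auto simp: sr_def\<close>)

lemma pow_Ering: "g \<in> Ering m \<Longrightarrow> g ^ k \<in> (Ering m :: 'k::comm_ring_1 mpoly set)"
  by (induction k) (use sr_Ering[where 'k='k] in \<open>auto simp: sr_def\<close>)



definition Dv :: "(nat\<Rightarrow>nat) \<Rightarrow> (nat\<Rightarrow>nat) \<Rightarrow> nat \<Rightarrow> nat \<Rightarrow> int" where
  "Dv src tgt h i = of_bool (tgt h = i) - of_bool (src h = i)"

definition wtA :: "nat \<Rightarrow> (nat\<Rightarrow>nat) \<Rightarrow> (nat\<Rightarrow>nat) \<Rightarrow> (nat \<Rightarrow> nat) \<Rightarrow> nat \<Rightarrow> int" where
  "wtA m src tgt A i = (\<Sum>h\<in>{1..m}. int (A h) * Dv src tgt h i)"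

definition EA :: "nat \<Rightarrow> (nat \<Rightarrow> nat) \<Rightarrow> 'k::comm_ring_1 mpoly" where
  "EA m A = (\<Prod>h\<in>{1..m}. Var (EV h) ^ A h)"

lemma EA_add: "EA m (\<lambda>h. A h + B h) = EA m A * EA m B"
  unfolding EA_def by (simp add: power_add prod.distrib)

lemma EA_cong: "(\<And>h. h \<in> {1..m} \<Longrightarrow> A h = B h) \<Longrightarrow> EA m A = EA m B"
  unfolding EA_def by (rule prod.cong) auto

lemma wtA_add: "wtA m src tgt (\<lambda>h. A h + B h) i = wtA m src tgt A i + wtA m src tgt B i"
  unfolding wtA_def by (simp add: distrib_right sum.distrib)

lemma wtA_cong: "(\<And>h. h \<in> {1..m} \<Longrightarrow> A h = B h) \<Longrightarrow> wtA m src tgt A = wtA m src tgt B"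
  unfolding wtA_def by (intro ext sum.cong) auto

lemma EA_Ering: "EA m A \<in> Ering m"
  unfolding EA_def by (intro prod_Ering pow_Ering Var_Ering) auto

lemma Var_power: "(Var x :: 'k::comm_ring_1 mpoly) ^ k = Poly_Mapping.single (Poly_Mapping.single x k) 1"
proof (induction k)
  case (Suc k)
  have "(Var x :: 'k mpoly) ^ Suc k = Var x * Poly_Mapping.single (Poly_Mapping.single x k) 1"
    by (metis Suc.IH power_Suc)
  also have "\<dots> = Poly_Mapping.single (Poly_Mapping.single x 1 + Poly_Mapping.single x k) 1"
    unfolding Var_def mult_single by simp
  also have "Poly_Mapping.single x 1 + Poly_Mapping.single x k = Poly_Mapping.single x (Suc k)"
    by (simp add: single_add[symmetric])
  finally show ?case .
qed (simp add: Var_def)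

lemma prod_single: "finite F \<Longrightarrow> (\<Prod>h\<in>F. Poly_Mapping.single (g h) (1::'k::comm_ring_1)) = Poly_Mapping.single (\<Sum>h\<in>F. g h) 1"
  by (induction F rule: finite_induct) (simp_all add: mult_single)

lemma EA_single: "(EA m A :: 'k::comm_ring_1 mpoly) = Poly_Mapping.single (\<Sum>h\<in>{1..m}. Poly_Mapping.single (EV h) (A h)) 1"
  unfolding EA_def Var_power by (simp add: prod_single)

lemma mono_expand:
  assumes "Poly_Mapping.keys (mon :: var \<Rightarrow>\<^sub>0 nat) \<subseteq> EV ` {1..m}"
  shows "mon = (\<Sum>h\<in>{1..m}. Poly_Mapping.single (EV h) (Poly_Mapping.lookup mon (EV h)))"
proof (rule poly_mapping_eqI)
  fix x
  show "Poly_Mapping.lookup mon x = Poly_Mapping.lookup (\<Sum>h\<in>{1..m}. Poly_Mapping.single (EV h) (Poly_Mapping.lookup mon (EV h))) x"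
  proof (cases "x \<in> EV ` {1..m}")
    case True
    then obtain h0 where h0: "h0 \<in> {1..m}" "x = EV h0" by blast
    have "(\<Sum>h\<in>{1..m}. Poly_Mapping.lookup (Poly_Mapping.single (EV h) (Poly_Mapping.lookup mon (EV h))) x)
        = (\<Sum>h\<in>{1..m}. if h = h0 then Poly_Mapping.lookup mon x else 0)"
      by (rule sum.cong) (auto simp: h0 lookup_single)
    also have "\<dots> = Poly_Mapping.lookup mon x" using h0 by simp
    finally show ?thesis by (simp add: lookup_sum)
  next
    case False
    then have "Poly_Mapping.lookup mon x = 0" using assms by (meson in_keys_iff subsetD)
    moreover have "(\<Sum>h\<in>{1..m}. Poly_Mapping.lookup (Poly_Mapping.single (EV h) (Poly_Mapping.lookup mon (EV h))) x) = 0"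
      by (rule sum.neutral) (use False in \<open>auto simp: lookup_single when_def\<close>)
    ultimately show ?thesis by (simp add: lookup_sum)
  qed
qed

lemma EA_mono: "Poly_Mapping.keys (mon :: var \<Rightarrow>\<^sub>0 nat) \<subseteq> EV ` {1..m} \<Longrightarrow>
  Poly_Mapping.single mon (1::'k::comm_ring_1) = EA m (\<lambda>h. Poly_Mapping.lookup mon (EV h))"
  unfolding EA_single using mono_expand by metis

lemma poly_expand: "(p :: 'a \<Rightarrow>\<^sub>0 'b::comm_monoid_add) = (\<Sum>mon\<in>Poly_Mapping.keys p. Poly_Mapping.single mon (Poly_Mapping.lookup p mon))"
proof (rule poly_mapping_eqI)
  fix x
  have "(\<Sum>mon\<in>Poly_Mapping.keys p. Poly_Mapping.lookup (Poly_Mapping.single mon (Poly_Mapping.lookup p mon)) x)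
      = (\<Sum>mon\<in>Poly_Mapping.keys p. if mon = x then Poly_Mapping.lookup p x else 0)"
    by (rule sum.cong) (auto simp: lookup_single)
  also have "\<dots> = Poly_Mapping.lookup p x" by (simp add: in_keys_iff)
  finally show "Poly_Mapping.lookup p x = Poly_Mapping.lookup (\<Sum>mon\<in>Poly_Mapping.keys p. Poly_Mapping.single mon (Poly_Mapping.lookup p mon)) x"
    by (simp add: lookup_sum)
qed



definition wtfull :: "nat \<Rightarrow> (nat\<Rightarrow>nat) \<Rightarrow> (nat\<Rightarrow>nat) \<Rightarrow> (var \<Rightarrow>\<^sub>0 nat) \<Rightarrow> nat \<Rightarrow> int" where
  "wtfull m src tgt mon i = int (Poly_Mapping.lookup mon (VV i)) - int (Poly_Mapping.lookup mon (ZV i))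
     + (\<Sum>h\<in>{1..m}. int (Poly_Mapping.lookup mon (EV h)) * Dv src tgt h i)"

lemma wtfull_add: "wtfull m src tgt (a + b) i = wtfull m src tgt a i + wtfull m src tgt b i"
  unfolding wtfull_def by (simp add: lookup_add distrib_right sum.distrib)

lemma wtfull_add_cong: "wtfull m src tgt a = wtfull m src tgt b \<Longrightarrow> wtfull m src tgt (c + a) = wtfull m src tgt (c + b)"
  by (rule ext) (simp add: wtfull_add)

lemma wtfull_EA: "wtfull m src tgt (\<Sum>h\<in>{1..m}. Poly_Mapping.single (EV h) (A h)) = wtA m src tgt A"
proof (rule ext)
  fix i
  have l: "Poly_Mapping.lookup (\<Sum>h\<in>{1..m}. Poly_Mapping.single (EV h) (A h)) (EV h') = (if h' \<in> {1..m} then A h' else 0)" for h'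
  proof -
    have "(\<Sum>h\<in>{1..m}. Poly_Mapping.lookup (Poly_Mapping.single (EV h) (A h)) (EV h')) = (\<Sum>h\<in>{1..m}. if h = h' then A h' else 0)"
      by (rule sum.cong) (auto simp: lookup_single when_def)
    then show ?thesis by (simp add: lookup_sum)
  qed
  have "Poly_Mapping.lookup (\<Sum>h\<in>{1..m}. Poly_Mapping.single (EV h) (A h)) (VV i) = 0"
       "Poly_Mapping.lookup (\<Sum>h\<in>{1..m}. Poly_Mapping.single (EV h) (A h)) (ZV i) = 0"
    by (simp_all add: lookup_sum lookup_single when_def)
  moreover have "(\<Sum>h\<in>{1..m}. int (Poly_Mapping.lookup (\<Sum>h\<in>{1..m}. Poly_Mapping.single (EV h) (A h)) (EV h)) * Dv src tgt h i)
     = (\<Sum>h\<in>{1..m}. int (A h) * Dv src tgt h i)"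
    by (rule sum.cong) (simp_all only: l, simp)
  ultimately show "wtfull m src tgt (\<Sum>h\<in>{1..m}. Poly_Mapping.single (EV h) (A h)) i = wtA m src tgt A i"
    unfolding wtfull_def wtA_def by simp
qed

definition Lw :: "nat \<Rightarrow> (nat\<Rightarrow>nat) \<Rightarrow> (nat\<Rightarrow>nat) \<Rightarrow> (nat \<Rightarrow> int) \<Rightarrow> 'k::comm_ring_1 mpoly \<Rightarrow> 'k" where
  "Lw m src tgt w p = (\<Sum>mon\<in>Poly_Mapping.keys p. Poly_Mapping.lookup p mon * (if wtfull m src tgt mon = w then 1 else 0))"

lemma Lw_superset: "finite S \<Longrightarrow> Poly_Mapping.keys p \<subseteq> S \<Longrightarrow>
   Lw m src tgt w p = (\<Sum>mon\<in>S. Poly_Mapping.lookup p mon * (if wtfull m src tgt mon = w then 1 else 0))"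
  unfolding Lw_def by (rule sum.mono_neutral_left) (auto simp: in_keys_iff)

lemma Lw_add: "Lw m src tgt w (p + q) = Lw m src tgt w p + Lw m src tgt w q"
proof -
  let ?S = "Poly_Mapping.keys p \<union> Poly_Mapping.keys q"
  have "Lw m src tgt w (p + q) = (\<Sum>mon\<in>?S. Poly_Mapping.lookup (p + q) mon * (if wtfull m src tgt mon = w then 1 else 0))"
    by (rule Lw_superset) (auto simp: keys_add)
  also have "\<dots> = (\<Sum>mon\<in>?S. Poly_Mapping.lookup p mon * (if wtfull m src tgt mon = w then 1 else 0))
     + (\<Sum>mon\<in>?S. Poly_Mapping.lookup q mon * (if wtfull m src tgt mon = w then 1 else 0))"
    by (simp add: lookup_add distrib_right sum.distrib)
  also have "\<dots> = Lw m src tgt w p + Lw m src tgt w q"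
    using Lw_superset[of ?S p m src tgt w] Lw_superset[of ?S q m src tgt w] by simp
  finally show ?thesis .
qed

lemma Lw_zero: "Lw m src tgt w 0 = 0"
  unfolding Lw_def by simp

lemma Lw_uminus: "Lw m src tgt w (- p) = - Lw m src tgt w p"
  unfolding Lw_def by (simp add: sum_negf)

lemma Lw_diff: "Lw m src tgt w (p - q) = Lw m src tgt w p - Lw m src tgt w q"
  using Lw_add[of m src tgt w p "-q"] by (simp add: Lw_uminus)

lemma Lw_sum: "Lw m src tgt w (\<Sum>x\<in>F. g x) = (\<Sum>x\<in>F. Lw m src tgt w (g x))"
  by (induction F rule: infinite_finite_induct) (simp_all add: Lw_zero Lw_add)

lemma Lw_single: "Lw m src tgt w (Poly_Mapping.single mon c) = c * (if wtfull m src tgt mon = w then 1 else 0)"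
  unfolding Lw_def by simp

lemma Lw_gen:
  assumes "wtfull m src tgt m1 = wtfull m src tgt m2"
  shows "Lw m src tgt w (g * (Poly_Mapping.single m1 1 - Poly_Mapping.single m2 1)) = 0"
proof -
  have "g * (Poly_Mapping.single m1 1 - Poly_Mapping.single m2 1)
     = (\<Sum>mon\<in>Poly_Mapping.keys g. Poly_Mapping.single (mon + m1) (Poly_Mapping.lookup g mon) - Poly_Mapping.single (mon + m2) (Poly_Mapping.lookup g mon))"
    by (subst poly_expand[of g]) (simp add: sum_distrib_right right_diff_distrib mult_single sum_subtractf)
  moreover have "wtfull m src tgt (mon + m1) = wtfull m src tgt (mon + m2)" for mon
    using wtfull_add_cong[OF assms] .
  ultimately show ?thesis by (simp add: Lw_sum Lw_diff Lw_single)
qed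

lemma toric_gen_form:
  assumes "s \<in> toric_gens n m src tgt"
  shows "\<exists>m1 m2. wtfull m src tgt m1 = wtfull m src tgt m2 \<and> s = Poly_Mapping.single m1 1 - Poly_Mapping.single m2 1"
proof -
  consider (e) h where "h \<in> {1..m}" "s = Var (EV h) - Var (ZV (src h)) * Var (VV (tgt h))"
    | (z) i where "i \<in> {1..n}" "s = Var (ZV i) * Var (VV i) - 1"
    using assms unfolding toric_gens_def by blast
  then show ?thesis
  proof cases
    case e
    let ?m1 = "Poly_Mapping.single (EV h) (1::nat)"
    let ?m2 = "Poly_Mapping.single (ZV (src h)) (1::nat) + Poly_Mapping.single (VV (tgt h)) 1"
    have "wtfull m src tgt ?m1 = wtfull m src tgt ?m2"
    proof (rule ext)
      fix i
      have "(\<Sum>h'\<in>{1..m}. int (Poly_Mapping.lookup ?m1 (EV h')) * Dv src tgt h' i) = (\<Sum>h'\<in>{1..m}. if h' = h then Dv src tgt h i else 0)"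
        by (rule sum.cong) (auto simp: lookup_single when_def)
      also have "\<dots> = Dv src tgt h i" using e by simp
      finally show "wtfull m src tgt ?m1 i = wtfull m src tgt ?m2 i"
        unfolding wtfull_def Dv_def by (simp add: lookup_add lookup_single when_def)
    qed
    moreover have "s = Poly_Mapping.single ?m1 1 - Poly_Mapping.single ?m2 1"
      using e by (simp add: Var_def mult_single)
    ultimately show ?thesis by blast
  next
    case z
    let ?m1 = "Poly_Mapping.single (ZV i) (1::nat) + Poly_Mapping.single (VV i) 1"
    have "wtfull m src tgt ?m1 = wtfull m src tgt 0"
      unfolding wtfull_def by (auto simp: lookup_add lookup_single when_def)
    moreover have "s = Poly_Mapping.single ?m1 1 - Poly_Mapping.single 0 1"
      using z by (simp add: Var_def mult_single)
    ultimately show ?thesis by blast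
  qed
qed

lemma Lw_ideal:
  assumes "p \<in> ideal_gen UNIV (toric_gens n m src tgt)"
  shows "Lw m src tgt w p = 0"
proof -
  from assms obtain F r where F: "finite F" "F \<subseteq> toric_gens n m src tgt" "p = (\<Sum>s\<in>F. r s * s)"
    unfolding ideal_gen_def by blast
  have "Lw m src tgt w (r s * s) = 0" if "s \<in> F" for s
    using toric_gen_form[of s n m src tgt] that F(2) Lw_gen by blast
  then show ?thesis using F by (simp add: Lw_sum)
qed



definition cg :: "nat \<Rightarrow> nat \<Rightarrow> (nat\<Rightarrow>nat) \<Rightarrow> (nat\<Rightarrow>nat) \<Rightarrow> 'k::comm_ring_1 mpoly \<Rightarrow> 'k mpoly \<Rightarrow> bool" where
  "cg n m src tgt x y \<longleftrightarrow> x - y \<in> ideal_gen UNIV (toric_gens n m src tgt)"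

lemma cg_refl: "cg n m src tgt x x"
  unfolding cg_def by (simp add: ig_zero)

lemma cg_sym: "cg n m src tgt x y \<Longrightarrow> cg n m src tgt y x"
  unfolding cg_def using ig_uminus[OF sr_UNIV] by fastforce

lemma cg_trans: "cg n m src tgt x y \<Longrightarrow> cg n m src tgt y z \<Longrightarrow> cg n m src tgt x z"
  unfolding cg_def using ig_add[OF sr_UNIV] by fastforce

lemma cg_multR: "cg n m src tgt x y \<Longrightarrow> cg n m src tgt (x * c) (y * c)"
  unfolding cg_def using ig_mult[OF sr_UNIV, of c "x - y"] by (simp add: algebra_simps)

lemma cg_multL: "cg n m src tgt x y \<Longrightarrow> cg n m src tgt (c * x) (c * y)"
  unfolding cg_def using ig_mult[OF sr_UNIV, of c "x - y"] by (simp add: algebra_simps)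

lemma cg_gen: "s - t \<in> toric_gens n m src tgt \<Longrightarrow> cg n m src tgt s t"
  unfolding cg_def by (rule ig_gen) auto

definition Pf :: "nat \<Rightarrow> int \<Rightarrow> 'k::comm_ring_1 mpoly" where
  "Pf i k = (if 0 \<le> k then Var (VV i) ^ nat k else Var (ZV i) ^ nat (- k))"

definition Nf :: "nat \<Rightarrow> (nat \<Rightarrow> int) \<Rightarrow> 'k::comm_ring_1 mpoly" where
  "Nf n w = (\<Prod>i\<in>{1..n}. Pf i (w i))"

lemma ZV_gen: "i \<in> {1..n} \<Longrightarrow> cg n m src tgt (Var (ZV i) * Var (VV i)) 1"
  by (rule cg_gen) (auto simp: toric_gens_def)

lemma Pf_V:
  assumes i: "i \<in> {1..n}"
  shows "cg n m src tgt (Pf i k * Var (VV i)) (Pf i (k + 1) :: 'k::comm_ring_1 mpoly)"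
proof (cases "0 \<le> k")
  case True
  then have "Pf i k * Var (VV i) = (Pf i (k + 1) :: 'k mpoly)"
    unfolding Pf_def by (simp add: nat_add_distrib power_add)
  then show ?thesis by (simp add: cg_refl)
next
  case False
  define j where "j = nat (- k - 1)"
  have k1: "Pf i k = (Var (ZV i) ^ j * Var (ZV i) :: 'k mpoly)"
    using False unfolding Pf_def j_def by (simp add: power_Suc2[symmetric] Suc_nat_eq_nat_zadd1)
  have k2: "Pf i (k + 1) = (Var (ZV i) ^ j :: 'k mpoly)"
    using False unfolding Pf_def j_def by auto
  have "cg n m src tgt (Var (ZV i) ^ j * (Var (ZV i) * Var (VV i))) (Var (ZV i) ^ j * 1 :: 'k mpoly)"
    by (rule cg_multL, rule ZV_gen[OF i])
  then show ?thesis by (simp add: k1 k2 mult.assoc)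
qed

lemma Pf_Z:
  assumes i: "i \<in> {1..n}"
  shows "cg n m src tgt (Pf i k * Var (ZV i)) (Pf i (k - 1) :: 'k::comm_ring_1 mpoly)"
proof (cases "0 < k")
  case False
  then have "Pf i k * Var (ZV i) = (Pf i (k - 1) :: 'k mpoly)"
    unfolding Pf_def by (auto simp: power_Suc2[symmetric] Suc_nat_eq_nat_zadd1)
  then show ?thesis by (simp add: cg_refl)
next
  case True
  define j where "j = nat (k - 1)"
  have k1: "Pf i k = (Var (VV i) ^ j * Var (VV i) :: 'k mpoly)"
    using True unfolding Pf_def j_def by (simp add: power_Suc2[symmetric] Suc_nat_eq_nat_zadd1)
  have k2: "Pf i (k - 1) = (Var (VV i) ^ j :: 'k mpoly)"
    using True unfolding Pf_def j_def by auto
  have "cg n m src tgt (Var (VV i) ^ j * (Var (ZV i) * Var (VV i))) (Var (VV i) ^ j * 1 :: 'k mpoly)"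
    by (rule cg_multL, rule ZV_gen[OF i])
  then show ?thesis by (simp add: k1 k2 mult_ac)
qed

lemma Nf_split: "i \<in> {1..n} \<Longrightarrow> (Nf n w :: 'k::comm_ring_1 mpoly) = Pf i (w i) * (\<Prod>j\<in>{1..n} - {i}. Pf j (w j))"
  unfolding Nf_def by (rule prod.remove) auto

lemma Nf_V:
  assumes i: "i \<in> {1..n}"
  shows "cg n m src tgt (Nf n w * Var (VV i)) (Nf n (w(i := w i + 1)) :: 'k::comm_ring_1 mpoly)"
proof -
  let ?R = "(\<Prod>j\<in>{1..n} - {i}. Pf j (w j)) :: 'k mpoly"
  have R: "(\<Prod>j\<in>{1..n} - {i}. Pf j ((w(i := w i + 1)) j)) = ?R"
    by (rule prod.cong) auto
  have eq1: "Nf n w * Var (VV i) = (Pf i (w i) * Var (VV i)) * ?R"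
    using Nf_split[OF i, of w, where 'k='k] by (simp add: mult_ac)
  have eq2: "Nf n (w(i := w i + 1)) = Pf i (w i + 1) * ?R"
    using Nf_split[OF i, of "w(i := w i + 1)"] R by simp
  show ?thesis unfolding eq1 eq2 by (rule cg_multR, rule Pf_V[OF i])
qed

lemma Nf_Z:
  assumes i: "i \<in> {1..n}"
  shows "cg n m src tgt (Nf n w * Var (ZV i)) (Nf n (w(i := w i - 1)) :: 'k::comm_ring_1 mpoly)"
proof -
  let ?R = "(\<Prod>j\<in>{1..n} - {i}. Pf j (w j)) :: 'k mpoly"
  have R: "(\<Prod>j\<in>{1..n} - {i}. Pf j ((w(i := w i - 1)) j)) = ?R"
    by (rule prod.cong) auto
  have eq1: "Nf n w * Var (ZV i) = (Pf i (w i) * Var (ZV i)) * ?R"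
    using Nf_split[OF i, of w, where 'k='k] by (simp add: mult_ac)
  have eq2: "Nf n (w(i := w i - 1)) = Pf i (w i - 1) * ?R"
    using Nf_split[OF i, of "w(i := w i - 1)"] R by simp
  show ?thesis unfolding eq1 eq2 by (rule cg_multR, rule Pf_Z[OF i])
qed

lemma Nf_E:
  assumes so: "simple_orientation n m src tgt" and h: "h \<in> {1..m}"
  shows "cg n m src tgt (Nf n w * Var (EV h)) (Nf n (\<lambda>i. w i + Dv src tgt h i) :: 'k::comm_ring_1 mpoly)"
proof -
  have s: "src h \<in> {1..n}" and t: "tgt h \<in> {1..n}" and st: "src h \<noteq> tgt h"
  proof -
    have "\<forall>h\<in>{1..m}. src h \<in> {1..n} \<and> tgt h \<in> {1..n} \<and> src h \<noteq> tgt h"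
      using so unfolding simple_orientation_def by (rule conjunct1)
    then show "src h \<in> {1..n}" "tgt h \<in> {1..n}" "src h \<noteq> tgt h" using h by blast+
  qed
  define w1 where "w1 = w(src h := w (src h) - 1)"
  have c1: "cg n m src tgt (Nf n w * Var (EV h)) (Nf n w * (Var (ZV (src h)) * Var (VV (tgt h))) :: 'k mpoly)"
    by (rule cg_multL, rule cg_gen, unfold toric_gens_def, rule UnI1, rule CollectI, rule exI[of _ h]) (use h in simp)
  have c2: "cg n m src tgt (Nf n w * Var (ZV (src h)) * Var (VV (tgt h))) (Nf n w1 * Var (VV (tgt h)) :: 'k mpoly)"
    unfolding w1_def by (rule cg_multR, rule Nf_Z[OF s])
  have c3: "cg n m src tgt (Nf n w1 * Var (VV (tgt h))) (Nf n (w1(tgt h := w1 (tgt h) + 1)) :: 'k mpoly)"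
    by (rule Nf_V[OF t])
  have eq: "w1(tgt h := w1 (tgt h) + 1) = (\<lambda>i. w i + Dv src tgt h i)"
    unfolding w1_def Dv_def using st by (auto simp: fun_eq_iff)
  have as: "Nf n w * (Var (ZV (src h)) * Var (VV (tgt h))) = (Nf n w * Var (ZV (src h)) * Var (VV (tgt h)) :: 'k mpoly)"
    by (simp add: mult.assoc)
  show ?thesis using cg_trans[OF c1[unfolded as] cg_trans[OF c2 c3]] unfolding eq .
qed

lemma Nf_Epow:
  assumes so: "simple_orientation n m src tgt" and h: "h \<in> {1..m}"
  shows "cg n m src tgt (Nf n w * Var (EV h) ^ k) (Nf n (\<lambda>i. w i + int k * Dv src tgt h i) :: 'k::comm_ring_1 mpoly)"
proof (induction k arbitrary: w)
  case 0
  then show ?case by (simp add: cg_refl)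
next
  case (Suc k)
  have c1: "cg n m src tgt (Nf n w * Var (EV h) ^ k * Var (EV h)) (Nf n (\<lambda>i. w i + int k * Dv src tgt h i) * Var (EV h) :: 'k mpoly)"
    by (rule cg_multR, rule Suc.IH)
  have c2: "cg n m src tgt (Nf n (\<lambda>i. w i + int k * Dv src tgt h i) * Var (EV h))
      (Nf n (\<lambda>i. (w i + int k * Dv src tgt h i) + Dv src tgt h i) :: 'k mpoly)"
    by (rule Nf_E[OF so h])
  have eq: "(\<lambda>i. (w i + int k * Dv src tgt h i) + Dv src tgt h i) = (\<lambda>i. w i + int (Suc k) * Dv src tgt h i)"
    by (auto simp: fun_eq_iff algebra_simps)
  have as: "Nf n w * Var (EV h) ^ k * Var (EV h) = (Nf n w * Var (EV h) ^ Suc k :: 'k mpoly)"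
    by (simp add: mult.assoc power_Suc2)
  show ?case using cg_trans[OF c1 c2] unfolding eq as .
qed

lemma Nf_prod:
  assumes so: "simple_orientation n m src tgt" and S: "finite S" "S \<subseteq> {1..m}"
  shows "cg n m src tgt (Nf n w * (\<Prod>h\<in>S. Var (EV h) ^ A h))
     (Nf n (\<lambda>i. w i + (\<Sum>h\<in>S. int (A h) * Dv src tgt h i)) :: 'k::comm_ring_1 mpoly)"
  using S
proof (induction S arbitrary: w rule: finite_induct)
  case empty
  then show ?case by (simp add: cg_refl)
next
  case (insert h S)
  have h: "h \<in> {1..m}" using insert by auto
  let ?w1 = "\<lambda>i. w i + int (A h) * Dv src tgt h i"
  have c1: "cg n m src tgt (Nf n w * Var (EV h) ^ A h * (\<Prod>h\<in>S. Var (EV h) ^ A h)) (Nf n ?w1 * (\<Prod>h\<in>S. Var (EV h) ^ A h) :: 'k mpoly)"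
    by (rule cg_multR, rule Nf_Epow[OF so h])
  have c2: "cg n m src tgt (Nf n ?w1 * (\<Prod>h\<in>S. Var (EV h) ^ A h)) (Nf n (\<lambda>i. ?w1 i + (\<Sum>h\<in>S. int (A h) * Dv src tgt h i)) :: 'k mpoly)"
    using insert.IH insert.prems by blast
  have eq: "(\<lambda>i. ?w1 i + (\<Sum>h\<in>S. int (A h) * Dv src tgt h i)) = (\<lambda>i. w i + (\<Sum>h\<in>insert h S. int (A h) * Dv src tgt h i))"
    using insert.hyps by (auto simp: fun_eq_iff algebra_simps)
  have as: "Nf n w * Var (EV h) ^ A h * (\<Prod>h\<in>S. Var (EV h) ^ A h) = (Nf n w * (\<Prod>h\<in>insert h S. Var (EV h) ^ A h) :: 'k mpoly)"
    using insert.hyps by (simp add: mult.assoc)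
  show ?case using cg_trans[OF c1 c2] unfolding eq as .
qed

lemma Nf_zero: "Nf n (\<lambda>_. 0) = 1"
  unfolding Nf_def Pf_def by simp

lemma EA_cg_Nf:
  assumes so: "simple_orientation n m src tgt"
  shows "cg n m src tgt (EA m A) (Nf n (wtA m src tgt A) :: 'k::comm_ring_1 mpoly)"
  using Nf_prod[OF so, of "{1..m}" "\<lambda>_. 0" A] unfolding EA_def wtA_def Nf_zero by simp

lemma EA_diff_ideal:
  assumes so: "simple_orientation n m src tgt" and w: "wtA m src tgt A = wtA m src tgt B"
  shows "(EA m A - EA m B :: 'k::comm_ring_1 mpoly) \<in> ideal_gen UNIV (toric_gens n m src tgt)"
proof -
  have "cg n m src tgt (EA m A) (Nf n (wtA m src tgt B) :: 'k mpoly)"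
    using EA_cg_Nf[OF so, of A] w by simp
  then have "cg n m src tgt (EA m A) (EA m B :: 'k mpoly)"
    using cg_trans cg_sym[OF EA_cg_Nf[OF so, of B]] by blast
  then show ?thesis unfolding cg_def .
qed



definition ind :: "nat set \<Rightarrow> nat \<Rightarrow> nat" where "ind S h = (if h \<in> S then 1 else 0)"

definition cycI :: "(nat\<Rightarrow>nat) \<Rightarrow> (nat\<Rightarrow>nat) \<Rightarrow> nat list \<Rightarrow> nat list \<Rightarrow> nat set" where
  "cycI src tgt vs es = {k. k < length vs \<and> src (es ! k) = vs ! k \<and> tgt (es ! k) = vs ! ((k + 1) mod length vs)}"

definition cycJ :: "(nat\<Rightarrow>nat) \<Rightarrow> (nat\<Rightarrow>nat) \<Rightarrow> nat list \<Rightarrow> nat list \<Rightarrow> nat set" where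
  "cycJ src tgt vs es = {k. k < length vs} - cycI src tgt vs es"

lemma EA_ind: "S \<subseteq> {1..m} \<Longrightarrow> EA m (ind S) = (\<Prod>h\<in>S. Var (EV h))"
proof -
  assume S: "S \<subseteq> {1..m}"
  have "EA m (ind S) = (\<Prod>h\<in>{1..m}. if h \<in> S then Var (EV h) else 1)"
    unfolding EA_def ind_def by (rule prod.cong) auto
  also have "\<dots> = (\<Prod>h\<in>{h\<in>{1..m}. h \<in> S}. Var (EV h))"
    by (rule prod.inter_filter[symmetric]) simp
  also have "{h\<in>{1..m}. h \<in> S} = S" using S by auto
  finally show ?thesis .
qed

lemma wtA_ind: "S \<subseteq> {1..m} \<Longrightarrow> wtA m src tgt (ind S) i = (\<Sum>h\<in>S. Dv src tgt h i)"
proof -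
  assume S: "S \<subseteq> {1..m}"
  have "wtA m src tgt (ind S) i = (\<Sum>h\<in>{1..m}. if h \<in> S then Dv src tgt h i else 0)"
    unfolding wtA_def ind_def by (rule sum.cong) auto
  also have "\<dots> = (\<Sum>h\<in>{h\<in>{1..m}. h \<in> S}. Dv src tgt h i)"
    by (rule sum.inter_filter[symmetric]) simp
  also have "{h\<in>{1..m}. h \<in> S} = S" using S by auto
  finally show ?thesis .
qed

lemma mod_succ: "k < (q::nat) \<Longrightarrow> (k + 1) mod q = (if k + 1 < q then k + 1 else 0)"
proof (cases "k + 1 < q")
  case False
  assume "k < q"
  then have "q = k + 1" using False by simp
  then show ?thesis by simp
qed simp

lemma mod_arith1:
  assumes kq: "k < (q::nat)" and kq': "k' < q" and q3: "3 \<le> q" and K1: "k = (k' + 1) mod q" and K2: "k' = (k + 1) mod q"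
  shows False
proof -
  have A: "k = (if k' + 1 < q then k' + 1 else 0)" using K1 mod_succ[OF kq'] by (rule trans)
  have B: "k' = (if k + 1 < q then k + 1 else 0)" using K2 mod_succ[OF kq] by (rule trans)
  have A1: "k' + 1 < q \<longrightarrow> k = k' + 1" using A by simp
  have A2: "\<not> k' + 1 < q \<longrightarrow> k = 0" using A by simp
  have B1: "k + 1 < q \<longrightarrow> k' = k + 1" using B by simp
  have B2: "\<not> k + 1 < q \<longrightarrow> k' = 0" using B by simp
  show False
  proof (cases "k' + 1 < q")
    case True
    then have k: "k = k' + 1" using A1 by blast
    show False
    proof (cases "k + 1 < q")
      case True
      then have "k' = k + 1" using B1 by blast
      then show False using k by linarith
    next
      case False
      then have "k' = 0" using B2 by blast
      then show False using k False q3 by linarith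
    qed
  next
    case False
    then have k: "k = 0" using A2 by blast
    then have "k + 1 < q" using q3 by linarith
    then have "k' = k + 1" using B1 by blast
    then show False using k False q3 by linarith
  qed
qed

lemma mod_arith2: "k < (q::nat) \<Longrightarrow> 2 \<le> q \<Longrightarrow> (k + 1) mod q \<noteq> k"
  using mod_succ[of k q] by simp

lemma rot_sum: "(\<Sum>k<(q::nat). g ((k + 1) mod q)) = (\<Sum>k<q. (g k :: int))"
proof (cases q)
  case (Suc p)
  have "(\<Sum>k<Suc p. g ((k + 1) mod Suc p)) = (\<Sum>k<p. g ((k + 1) mod Suc p)) + g ((p + 1) mod Suc p)"
    by simp
  also have "(\<Sum>k<p. g ((k + 1) mod Suc p)) = (\<Sum>k<p. g (Suc k))"
    by (rule sum.cong) auto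
  also have "g ((p + 1) mod Suc p) = g 0" by simp
  also have "(\<Sum>k<p. g (Suc k)) + g 0 = (\<Sum>k<Suc p. g k)"
    by (subst sum.lessThan_Suc_shift) (simp add: add.commute)
  finally show ?thesis using Suc by simp
qed simp

lemma so_edge:
  assumes so: "simple_orientation n m src tgt" and h: "h \<in> {1..m}"
  shows "src h \<in> {1..n}" "tgt h \<in> {1..n}" "src h \<noteq> tgt h"
proof -
  have "\<forall>h\<in>{1..m}. src h \<in> {1..n} \<and> tgt h \<in> {1..n} \<and> src h \<noteq> tgt h"
    using so unfolding simple_orientation_def by (rule conjunct1)
  then show "src h \<in> {1..n}" "tgt h \<in> {1..n}" "src h \<noteq> tgt h" using h by blast+
qed

lemma so_inj:
  assumes so: "simple_orientation n m src tgt" and h: "h \<in> {1..m}" "h' \<in> {1..m}"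
    and e: "{src h, tgt h} = {src h', tgt h'}"
  shows "h = h'"
proof -
  have "\<forall>h \<in> {1..m}. \<forall>h' \<in> {1..m}. {src h, tgt h} = {src h', tgt h'} \<longrightarrow> h = h'"
    using so unfolding simple_orientation_def by (rule conjunct2)
  then show ?thesis using h e by blast
qed

lemma cycle_facts:
  assumes so: "simple_orientation n m src tgt" and cy: "is_cycle n m src tgt vs es"
  shows "distinct es" "set es \<subseteq> {1..m}"
    "\<And>k. k < length vs \<Longrightarrow> vs ! k \<noteq> vs ! ((k + 1) mod length vs)"
proof -
  let ?q = "length vs"
  have len: "length es = ?q" and q3: "3 \<le> ?q" and dvs: "distinct vs"
    and ek: "\<And>k. k < ?q \<Longrightarrow> es ! k \<in> {1..m} \<and> {src (es ! k), tgt (es ! k)} = {vs ! k, vs ! ((k + 1) mod ?q)}"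
    using cy unfolding is_cycle_def by blast+
  show neq: "vs ! k \<noteq> vs ! ((k + 1) mod ?q)" if "k < ?q" for k
  proof -
    have "0 < ?q" using q3 by linarith
    then have "(k+1) mod ?q < ?q" by (rule mod_less_divisor)
    then show ?thesis using that q3 mod_arith2[of k ?q] nth_eq_iff_index_eq[OF dvs, of k "(k+1) mod ?q"] by simp
  qed
  show "set es \<subseteq> {1..m}" using ek len by (auto simp: in_set_conv_nth)
  show "distinct es"
  proof (subst distinct_conv_nth, intro allI impI)
    fix k k' assume k: "k < length es" and k': "k' < length es" and ne: "k \<noteq> k'"
    show "es ! k \<noteq> es ! k'"
    proof
      assume eq: "es ! k = es ! k'"
      have "{vs ! k, vs ! ((k + 1) mod ?q)} = {vs ! k', vs ! ((k' + 1) mod ?q)}"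
        using ek[of k] ek[of k'] k k' len eq by simp
      moreover have "vs ! k \<noteq> vs ! k'" using ne k k' len dvs by (simp add: nth_eq_iff_index_eq)
      ultimately have AB: "vs ! k = vs ! ((k' + 1) mod ?q) \<and> vs ! ((k + 1) mod ?q) = vs ! k'"
        by (auto simp: doubleton_eq_iff)
      have q0: "0 < ?q" using q3 by linarith
      have m1: "(k' + 1) mod ?q < ?q" using q0 by (rule mod_less_divisor)
      have m2: "(k + 1) mod ?q < ?q" using q0 by (rule mod_less_divisor)
      have kq: "k < ?q" "k' < ?q" using k k' len by auto
      have K1: "k = (k' + 1) mod ?q"
        using iffD1[OF nth_eq_iff_index_eq[OF dvs kq(1) m1]] AB by blast
      have K2': "(k + 1) mod ?q = k'"
        using iffD1[OF nth_eq_iff_index_eq[OF dvs m2 kq(2)]] AB by blast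
      have K2: "k' = (k + 1) mod ?q" using K2' by (rule sym)
      show False using mod_arith1[OF kq q3 K1 K2] .
    qed
  qed
qed

lemma cycle_fC:
  assumes so: "simple_orientation n m src tgt" and cy: "is_cycle n m src tgt vs es"
  defines "SI \<equiv> (\<lambda>k. es ! k) ` cycI src tgt vs es" and "SJ \<equiv> (\<lambda>k. es ! k) ` cycJ src tgt vs es"
  shows "SI \<subseteq> {1..m}" "SJ \<subseteq> {1..m}"
    "(fC src tgt vs es :: 'k::comm_ring_1 mpoly) = EA m (ind SI) - EA m (ind SJ)"
    "wtA m src tgt (ind SI) = wtA m src tgt (ind SJ)"
proof -
  let ?q = "length vs"
  let ?I = "cycI src tgt vs es" and ?J = "cycJ src tgt vs es"
  have len: "length es = ?q" and q3: "3 \<le> ?q" and dvs: "distinct vs"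
    and ek: "\<And>k. k < ?q \<Longrightarrow> es ! k \<in> {1..m} \<and> {src (es ! k), tgt (es ! k)} = {vs ! k, vs ! ((k + 1) mod ?q)}"
    using cy unfolding is_cycle_def by blast+
  note cf = cycle_facts[OF so cy]
  have Isub: "?I \<subseteq> {..<?q}" and Jsub: "?J \<subseteq> {..<?q}" unfolding cycI_def cycJ_def by auto
  have injI: "inj_on (\<lambda>k. es ! k) ?I" and injJ: "inj_on (\<lambda>k. es ! k) ?J"
    by (rule inj_on_nth[OF cf(1)], use Isub len in auto, rule inj_on_nth[OF cf(1)], use Jsub len in auto)
  show SI: "SI \<subseteq> {1..m}"
  proof
    fix h assume "h \<in> SI"
    then obtain k where "k \<in> ?I" "h = es ! k" unfolding SI_def by blast
    then show "h \<in> {1..m}" using ek[of k] Isub by blast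
  qed
  show SJ: "SJ \<subseteq> {1..m}"
  proof
    fix h assume "h \<in> SJ"
    then obtain k where "k \<in> ?J" "h = es ! k" unfolding SJ_def by blast
    then show "h \<in> {1..m}" using ek[of k] Jsub by blast
  qed
  have p1: "(\<Prod>k\<in>?I. Var (EV (es ! k))) = (\<Prod>h\<in>SI. Var (EV h) :: 'k mpoly)"
    unfolding SI_def by (rule prod.reindex[OF injI, symmetric, unfolded comp_def])
  have p2: "(\<Prod>k\<in>?J. Var (EV (es ! k))) = (\<Prod>h\<in>SJ. Var (EV h) :: 'k mpoly)"
    unfolding SJ_def by (rule prod.reindex[OF injJ, symmetric, unfolded comp_def])
  have p3: "fC src tgt vs es = (\<Prod>k\<in>?I. Var (EV (es ! k))) - (\<Prod>k\<in>?J. Var (EV (es ! k)) :: 'k mpoly)"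
    unfolding fC_def Let_def cycJ_def cycI_def by (rule refl)
  have p4: "EA m (ind SI) = (\<Prod>h\<in>SI. Var (EV h) :: 'k mpoly)" by (rule EA_ind[OF SI])
  have p5: "EA m (ind SJ) = (\<Prod>h\<in>SJ. Var (EV h) :: 'k mpoly)" by (rule EA_ind[OF SJ])
  show "(fC src tgt vs es :: 'k::comm_ring_1 mpoly) = EA m (ind SI) - EA m (ind SJ)"
    unfolding p3 p1 p2 p4 p5 ..
  show "wtA m src tgt (ind SI) = wtA m src tgt (ind SJ)"
  proof (rule ext)
    fix i
    define g where "g k = of_bool (vs ! ((k + 1) mod ?q) = i) - (of_bool (vs ! k = i) :: int)" for k
    have DI: "Dv src tgt (es ! k) i = g k" if "k \<in> ?I" for k
      using that unfolding cycI_def Dv_def g_def by auto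
    have DJ: "Dv src tgt (es ! k) i = - g k" if "k \<in> ?J" for k
    proof -
      have k: "k < ?q" and nI: "k \<notin> ?I" using that unfolding cycJ_def by auto
      have "{src (es ! k), tgt (es ! k)} = {vs ! k, vs ! ((k + 1) mod ?q)}" using ek[OF k] by blast
      moreover have "vs ! k \<noteq> vs ! ((k + 1) mod ?q)" using cf(3)[OF k] .
      moreover have "\<not> (src (es ! k) = vs ! k \<and> tgt (es ! k) = vs ! ((k + 1) mod ?q))"
        using nI k unfolding cycI_def by auto
      ultimately have "src (es ! k) = vs ! ((k + 1) mod ?q) \<and> tgt (es ! k) = vs ! k"
        by (auto simp: doubleton_eq_iff)
      then show ?thesis unfolding Dv_def g_def by auto
    qed
    have "wtA m src tgt (ind SI) i = (\<Sum>k\<in>?I. Dv src tgt (es ! k) i)"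
      unfolding wtA_ind[OF SI] unfolding SI_def by (rule sum.reindex[OF injI, unfolded comp_def])
    also have "\<dots> = (\<Sum>k\<in>?I. g k)" using DI by simp
    finally have wI: "wtA m src tgt (ind SI) i = (\<Sum>k\<in>?I. g k)" .
    have "wtA m src tgt (ind SJ) i = (\<Sum>k\<in>?J. Dv src tgt (es ! k) i)"
      unfolding wtA_ind[OF SJ] unfolding SJ_def by (rule sum.reindex[OF injJ, unfolded comp_def])
    also have "\<dots> = (\<Sum>k\<in>?J. - g k)" using DJ by simp
    finally have wJ: "wtA m src tgt (ind SJ) i = - (\<Sum>k\<in>?J. g k)" by (simp add: sum_negf)
    have "(\<Sum>k\<in>?I. g k) + (\<Sum>k\<in>?J. g k) = (\<Sum>k<?q. g k)"
    proof -
      have "{..<?q} = ?I \<union> ?J" "?I \<inter> ?J = {}" unfolding cycJ_def cycI_def by auto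
      moreover have "finite ?I" "finite ?J" using Isub Jsub finite_subset by blast+
      ultimately show ?thesis using sum.union_disjoint[of ?I ?J g] by simp
    qed
    also have "\<dots> = 0"
    proof -
      have r: "(\<Sum>k<?q. of_bool (vs ! ((k + 1) mod ?q) = i)) = (\<Sum>k<?q. (of_bool (vs ! k = i) :: int))"
        by (rule rot_sum)
      show ?thesis unfolding g_def sum_subtractf r by simp
    qed
    finally show "wtA m src tgt (ind SI) i = wtA m src tgt (ind SJ) i" using wI wJ by simp
  qed
qed



lemma find_cycle:
  fixes R :: "nat \<Rightarrow> nat \<Rightarrow> bool" and V :: "nat set"
  assumes fV: "finite V" and RV: "\<And>u w. R u w \<Longrightarrow> u \<in> V \<and> w \<in> V"
    and R0: "R u0 w0" and out: "\<And>x u. R x u \<Longrightarrow> \<exists>w. R u w"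
  shows "\<exists>vs. vs \<noteq> [] \<and> distinct vs \<and> set vs \<subseteq> V \<and> (\<forall>k<length vs. R (vs ! k) (vs ! ((k + 1) mod length vs)))"
proof -
  define nx where "nx u = (SOME w. R u w)" for u
  define x where "x j = (nx ^^ j) w0" for j
  have xS: "x (Suc j) = nx (x j)" for j unfolding x_def by simp
  have inarc: "\<exists>y. R y (x j)" for j
  proof (induction j)
    case 0
    show ?case using R0 unfolding x_def by auto
  next
    case (Suc j)
    then obtain y where "R y (x j)" by blast
    then have "\<exists>w. R (x j) w" by (rule out)
    then have "R (x j) (nx (x j))" unfolding nx_def by (rule someI_ex)
    then show ?case unfolding xS by blast
  qed
  have step: "R (x j) (x (Suc j))" for j
  proof -
    obtain y where "R y (x j)" using inarc by blast
    then have "\<exists>w. R (x j) w" by (rule out)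
    then have "R (x j) (nx (x j))" unfolding nx_def by (rule someI_ex)
    then show ?thesis unfolding xS .
  qed
  have xV: "x j \<in> V" for j using RV[OF step[of j]] by blast
  have ninj: "\<not> inj_on x {..card V}"
  proof
    assume inj: "inj_on x {..card V}"
    have "card (x ` {..card V}) = card {..card V}" using inj by (rule card_image)
    moreover have "card (x ` {..card V}) \<le> card V" using fV xV by (intro card_mono) auto
    ultimately show False by simp
  qed
  then obtain a b where ab: "a \<le> card V" "b \<le> card V" "a \<noteq> b" "x a = x b"
    unfolding inj_on_def by auto
  define P where "P j \<longleftrightarrow> (\<exists>i<j. x i = x j)" for j
  have "\<exists>j. P j"
  proof (cases "a < b")
    case True then show ?thesis unfolding P_def using ab by blast
  next
    case False then have "b < a" using ab by simp
    then show ?thesis unfolding P_def using ab by metis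
  qed
  define j0 where "j0 = (LEAST j. P j)"
  have Pj0: "P j0" unfolding j0_def using \<open>\<exists>j. P j\<close> by (rule LeastI_ex)
  have minj: "\<not> P j" if "j < j0" for j using that unfolding j0_def by (rule not_less_Least)
  obtain i0 where i0: "i0 < j0" "x i0 = x j0" using Pj0 unfolding P_def by blast
  define q where "q = j0 - i0"
  define vs where "vs = map (\<lambda>k. x (i0 + k)) [0..<q]"
  have q0: "0 < q" unfolding q_def using i0 by simp
  have len: "length vs = q" unfolding vs_def by simp
  have nth: "vs ! k = x (i0 + k)" if "k < q" for k unfolding vs_def using that by simp
  have "distinct vs"
  proof -
    have "inj_on (\<lambda>k. x (i0 + k)) {0..<q}"
    proof (rule inj_onI)
      fix a b assume a: "a \<in> {0..<q}" and b: "b \<in> {0..<q}" and e: "x (i0 + a) = x (i0 + b)"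
      show "a = b"
      proof (rule ccontr)
        assume "a \<noteq> b"
        then consider "a < b" | "b < a" by linarith
        then show False
        proof cases
          case 1
          then have "P (i0 + b)" unfolding P_def using e by (intro exI[of _ "i0 + a"]) simp
          moreover have "i0 + b < j0" using b unfolding q_def by simp
          ultimately show False using minj by blast
        next
          case 2
          then have "P (i0 + a)" unfolding P_def using e by (intro exI[of _ "i0 + b"]) simp
          moreover have "i0 + a < j0" using a unfolding q_def by simp
          ultimately show False using minj by blast
        qed
      qed
    qed
    then show ?thesis unfolding vs_def by (simp add: distinct_map)
  qed
  moreover have "vs \<noteq> []" using q0 len by auto
  moreover have "set vs \<subseteq> V" unfolding vs_def using xV by auto
  moreover have "\<forall>k<length vs. R (vs ! k) (vs ! ((k + 1) mod length vs))"
  proof (intro allI impI)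
    fix k assume k: "k < length vs"
    then have kq: "k < q" using len by simp
    have "vs ! ((k + 1) mod q) = x (i0 + k + 1)"
    proof (cases "k + 1 < q")
      case True
      then show ?thesis using nth[of "k + 1"] by simp
    next
      case False
      then have "k + 1 = q" using kq by simp
      then have "(k + 1) mod q = 0" by simp
      moreover have "i0 + k + 1 = j0" using \<open>k + 1 = q\<close> i0 unfolding q_def by simp
      ultimately show ?thesis using nth[of 0] q0 i0 by simp
    qed
    then show "R (vs ! k) (vs ! ((k + 1) mod length vs))"
      using step[of "i0 + k"] nth[OF kq] len by simp
  qed
  ultimately show ?thesis by blast
qed



definition arcE :: "nat \<Rightarrow> (nat\<Rightarrow>nat) \<Rightarrow> (nat\<Rightarrow>nat) \<Rightarrow> (nat\<Rightarrow>nat) \<Rightarrow> (nat\<Rightarrow>nat) \<Rightarrow> nat \<Rightarrow> nat \<Rightarrow> nat \<Rightarrow> bool" where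
  "arcE m src tgt A B h u w \<longleftrightarrow> h \<in> {1..m} \<and>
     ((int (A h) > int (B h) \<and> src h = u \<and> tgt h = w) \<or> (int (A h) < int (B h) \<and> src h = w \<and> tgt h = u))"

definition arc :: "nat \<Rightarrow> (nat\<Rightarrow>nat) \<Rightarrow> (nat\<Rightarrow>nat) \<Rightarrow> (nat\<Rightarrow>nat) \<Rightarrow> (nat\<Rightarrow>nat) \<Rightarrow> nat \<Rightarrow> nat \<Rightarrow> bool" where
  "arc m src tgt A B u w \<longleftrightarrow> (\<exists>h. arcE m src tgt A B h u w)"

lemma balance:
  assumes w: "wtA m src tgt A = wtA m src tgt B"
  shows "(\<Sum>h\<in>{1..m}. (int (A h) - int (B h)) * Dv src tgt h i) = 0"
proof -
  have "wtA m src tgt A i - wtA m src tgt B i = 0" using w by simp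
  then show ?thesis unfolding wtA_def by (simp add: sum_subtractf left_diff_distrib)
qed

lemma out_arc:
  assumes so: "simple_orientation n m src tgt" and w: "wtA m src tgt A = wtA m src tgt B"
    and a: "arc m src tgt A B x u"
  shows "\<exists>w. arc m src tgt A B u w"
proof (rule ccontr)
  assume no: "\<not> (\<exists>w. arc m src tgt A B u w)"
  let ?f = "\<lambda>h. (int (A h) - int (B h)) * Dv src tgt h u"
  have nonneg: "0 \<le> ?f h" if h: "h \<in> {1..m}" for h
  proof -
    have st: "src h \<noteq> tgt h" using so_edge[OF so h] by blast
    consider "tgt h = u" | "src h = u" | "tgt h \<noteq> u \<and> src h \<noteq> u" by blast
    then show ?thesis
    proof cases
      case 1
      then have D: "Dv src tgt h u = 1" using st unfolding Dv_def by simp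
      have "\<not> int (A h) < int (B h)"
      proof
        assume "int (A h) < int (B h)"
        then have "arcE m src tgt A B h u (src h)" unfolding arcE_def using h 1 by blast
        then show False using no unfolding arc_def by blast
      qed
      then show ?thesis using D by simp
    next
      case 2
      then have D: "Dv src tgt h u = -1" using st unfolding Dv_def by simp
      have "\<not> int (A h) > int (B h)"
      proof
        assume "int (A h) > int (B h)"
        then have "arcE m src tgt A B h u (tgt h)" unfolding arcE_def using h 2 by blast
        then show False using no unfolding arc_def by blast
      qed
      then show ?thesis using D by simp
    next
      case 3
      then have "Dv src tgt h u = 0" unfolding Dv_def by simp
      then show ?thesis by simp
    qed
  qed
  obtain h1 where h1: "arcE m src tgt A B h1 x u" using a unfolding arc_def by blast
  have h1m: "h1 \<in> {1..m}" using h1 unfolding arcE_def by blast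
  have st1: "src h1 \<noteq> tgt h1" using so_edge[OF so h1m] by blast
  have pos: "0 < ?f h1"
  proof -
    consider "int (A h1) > int (B h1)" "src h1 = x" "tgt h1 = u" | "int (A h1) < int (B h1)" "src h1 = u" "tgt h1 = x"
      using h1 unfolding arcE_def by blast
    then show ?thesis
    proof cases
      case 1
      then have "Dv src tgt h1 u = 1" using st1 unfolding Dv_def by auto
      then show ?thesis using 1 by simp
    next
      case 2
      then have "Dv src tgt h1 u = -1" using st1 unfolding Dv_def by auto
      then show ?thesis using 2 by simp
    qed
  qed
  have "0 < (\<Sum>h\<in>{1..m}. ?f h)" by (rule sum_pos2[of "{1..m}" h1 ?f]) (use h1m pos nonneg in auto)
  then show False using balance[OF w, of u] by simp
qed

lemma exists_cycle:
  assumes so: "simple_orientation n m src tgt" and w: "wtA m src tgt A = wtA m src tgt B"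
    and h0: "h0 \<in> {1..m}" "A h0 \<noteq> B h0"
  shows "\<exists>vs es. is_cycle n m src tgt vs es \<and>
     (\<forall>k<length vs. arcE m src tgt A B (es ! k) (vs ! k) (vs ! ((k + 1) mod length vs)))"
proof -
  let ?R = "arc m src tgt A B"
  have RV: "?R u w \<Longrightarrow> u \<in> {1..n} \<and> w \<in> {1..n}" for u w
  proof -
    assume "?R u w"
    then obtain h where h: "arcE m src tgt A B h u w" unfolding arc_def by blast
    then have hm: "h \<in> {1..m}" unfolding arcE_def by blast
    show ?thesis using h so_edge[OF so hm] unfolding arcE_def by auto
  qed
  have "\<exists>u0 w0. ?R u0 w0"
  proof (cases "int (A h0) > int (B h0)")
    case True
    then have "arcE m src tgt A B h0 (src h0) (tgt h0)" unfolding arcE_def using h0 by blast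
    then show ?thesis unfolding arc_def by blast
  next
    case False
    then have "int (A h0) < int (B h0)" using h0 by linarith
    then have "arcE m src tgt A B h0 (tgt h0) (src h0)" unfolding arcE_def using h0 by blast
    then show ?thesis unfolding arc_def by blast
  qed
  then obtain u0 w0 where R0: "?R u0 w0" by blast
  obtain vs where vs: "vs \<noteq> []" "distinct vs" "set vs \<subseteq> {1..n}"
    "\<forall>k<length vs. ?R (vs ! k) (vs ! ((k + 1) mod length vs))"
    using find_cycle[of "{1..n}" ?R u0 w0] RV R0 out_arc[OF so w] by blast
  let ?q = "length vs"
  define es where "es = map (\<lambda>k. SOME h. arcE m src tgt A B h (vs ! k) (vs ! ((k + 1) mod ?q))) [0..<?q]"
  have esl: "length es = ?q" unfolding es_def by simp
  have esk: "arcE m src tgt A B (es ! k) (vs ! k) (vs ! ((k + 1) mod ?q))" if k: "k < ?q" for k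
  proof -
    have "\<exists>h. arcE m src tgt A B h (vs ! k) (vs ! ((k + 1) mod ?q))" using vs(4) k unfolding arc_def by blast
    then have "arcE m src tgt A B (SOME h. arcE m src tgt A B h (vs ! k) (vs ! ((k + 1) mod ?q))) (vs ! k) (vs ! ((k + 1) mod ?q))"
      by (rule someI_ex)
    then show ?thesis unfolding es_def using k by simp
  qed
  have noloop: "\<not> arcE m src tgt A B h u u" for h u
  proof
    assume a: "arcE m src tgt A B h u u"
    then have "h \<in> {1..m}" unfolding arcE_def by blast
    then have "src h \<noteq> tgt h" using so_edge[OF so] by blast
    then show False using a unfolding arcE_def by auto
  qed
  have q1: "?q \<noteq> 1"
  proof
    assume q: "?q = 1"
    have "arcE m src tgt A B (es ! 0) (vs ! 0) (vs ! ((0 + 1) mod ?q))" using esk[of 0] q by simp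
    then show False using q noloop by simp
  qed
  have q2: "?q \<noteq> 2"
  proof
    assume q: "?q = 2"
    have a1: "arcE m src tgt A B (es ! 0) (vs ! 0) (vs ! 1)" using esk[of 0] q by simp
    have a2: "arcE m src tgt A B (es ! 1) (vs ! 1) (vs ! 0)" using esk[of 1] q by simp
    have ne: "vs ! 0 \<noteq> vs ! 1" using vs(2) q by (simp add: nth_eq_iff_index_eq)
    have m1: "es ! 0 \<in> {1..m}" and m2: "es ! 1 \<in> {1..m}" using a1 a2 unfolding arcE_def by blast+
    have "{src (es ! 0), tgt (es ! 0)} = {vs ! 0, vs ! 1}" using a1 unfolding arcE_def by auto
    moreover have "{src (es ! 1), tgt (es ! 1)} = {vs ! 0, vs ! 1}" using a2 unfolding arcE_def by auto
    ultimately have "es ! 0 = es ! 1" using so_inj[OF so m1 m2] by simp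
    then have a3: "arcE m src tgt A B (es ! 0) (vs ! 1) (vs ! 0)" using a2 by simp
    show False using a1 a3 ne unfolding arcE_def by auto
  qed
  have "?q \<noteq> 0" using vs(1) by simp
  then have q3: "3 \<le> ?q" using q1 q2 by linarith
  have "is_cycle n m src tgt vs es"
    unfolding is_cycle_def
  proof (intro conjI allI impI)
    show "length es = ?q" by (rule esl)
    show "3 \<le> ?q" by (rule q3)
    show "distinct vs" by (rule vs(2))
    show "set vs \<subseteq> {1..n}" by (rule vs(3))
    fix k assume k: "k < ?q"
    show "es ! k \<in> {1..m}" using esk[OF k] unfolding arcE_def by blast
    show "{src (es ! k), tgt (es ! k)} = {vs ! k, vs ! ((k + 1) mod ?q)}"
      using esk[OF k] unfolding arcE_def by auto
  qed
  then show ?thesis using esk by blast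
qed



abbreviation Cyc :: "nat \<Rightarrow> nat \<Rightarrow> (nat\<Rightarrow>nat) \<Rightarrow> (nat\<Rightarrow>nat) \<Rightarrow> 'k::comm_ring_1 mpoly set" where
  "Cyc n m src tgt \<equiv> {fC src tgt vs es | vs es. is_cycle n m src tgt vs es}"

lemma core:
  assumes so: "simple_orientation n m src tgt"
  shows "wtA m src tgt A = wtA m src tgt B \<Longrightarrow>
    (EA m A - EA m B :: 'k::comm_ring_1 mpoly) \<in> ideal_gen (Ering m) (Cyc n m src tgt)"
proof (induction "\<Sum>h\<in>{1..m}. A h + B h" arbitrary: A B rule: less_induct)
  case less
  note w = less.prems
  show ?case
  proof (cases "\<forall>h\<in>{1..m}. A h = B h")
    case True
    then have "EA m A = (EA m B :: 'k mpoly)" by (intro EA_cong) auto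
    then show ?thesis by (simp add: ig_zero)
  next
    case False
    then obtain h0 where h0: "h0 \<in> {1..m}" "A h0 \<noteq> B h0" by blast
    obtain vs es where cy: "is_cycle n m src tgt vs es"
      and ar: "\<forall>k<length vs. arcE m src tgt A B (es ! k) (vs ! k) (vs ! ((k + 1) mod length vs))"
      using exists_cycle[OF so w h0] by blast
    let ?q = "length vs"
    define SI where "SI = (\<lambda>k. es ! k) ` cycI src tgt vs es"
    define SJ where "SJ = (\<lambda>k. es ! k) ` cycJ src tgt vs es"
    have SIm: "SI \<subseteq> {1..m}" and SJm: "SJ \<subseteq> {1..m}"
      and fCeq: "(fC src tgt vs es :: 'k mpoly) = EA m (ind SI) - EA m (ind SJ)"
      and wIJ: "wtA m src tgt (ind SI) = wtA m src tgt (ind SJ)"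
      using cycle_fC[OF so cy] unfolding SI_def SJ_def by blast+
    note cf = cycle_facts[OF so cy]
    have q3: "3 \<le> ?q" using cy unfolding is_cycle_def by blast
    have posI: "int (A h) > int (B h)" if hS: "h \<in> SI" for h
    proof -
      obtain k where k: "k \<in> cycI src tgt vs es" "h = es ! k" using hS unfolding SI_def by blast
      have kq: "k < ?q" and st: "src h = vs ! k" "tgt h = vs ! ((k + 1) mod ?q)"
        using k unfolding cycI_def by auto
      have "arcE m src tgt A B h (vs ! k) (vs ! ((k + 1) mod ?q))" using ar kq k(2) by blast
      then show ?thesis using st cf(3)[OF kq] unfolding arcE_def by auto
    qed
    have negJ: "int (A h) < int (B h)" if hS: "h \<in> SJ" for h
    proof -
      obtain k where k: "k \<in> cycJ src tgt vs es" "h = es ! k" using hS unfolding SJ_def by blast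
      have kq: "k < ?q" and st: "\<not> (src h = vs ! k \<and> tgt h = vs ! ((k + 1) mod ?q))"
        using k unfolding cycJ_def cycI_def by auto
      have "arcE m src tgt A B h (vs ! k) (vs ! ((k + 1) mod ?q))" using ar kq k(2) by blast
      then show ?thesis using st unfolding arcE_def by auto
    qed
    have leA: "ind SI h \<le> A h" for h using posI[of h] unfolding ind_def by auto
    have leB: "ind SJ h \<le> B h" for h using negJ[of h] unfolding ind_def by auto
    define A' where "A' h = A h - ind SI h" for h
    define B' where "B' h = B h - ind SJ h" for h
    have A_eq: "A = (\<lambda>h. ind SI h + A' h)" unfolding A'_def using leA by (auto simp: fun_eq_iff)
    have B_eq: "B = (\<lambda>h. ind SJ h + B' h)" unfolding B'_def using leB by (auto simp: fun_eq_iff)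
    have EA_A: "EA m A = (EA m (ind SI) * EA m A' :: 'k mpoly)" by (subst A_eq) (rule EA_add)
    have EA_B: "EA m B = (EA m (ind SJ) * EA m B' :: 'k mpoly)" by (subst B_eq) (rule EA_add)
    have w': "wtA m src tgt A' = wtA m src tgt B'"
    proof (rule ext)
      fix i
      have "wtA m src tgt A i = wtA m src tgt (ind SI) i + wtA m src tgt A' i"
        by (subst A_eq) (rule wtA_add)
      moreover have "wtA m src tgt B i = wtA m src tgt (ind SJ) i + wtA m src tgt B' i"
        by (subst B_eq) (rule wtA_add)
      ultimately show "wtA m src tgt A' i = wtA m src tgt B' i" using w wIJ by simp
    qed
    have lt: "(\<Sum>h\<in>{1..m}. A' h + B' h) < (\<Sum>h\<in>{1..m}. A h + B h)"
    proof (rule sum_strict_mono_ex1)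
      show "finite {1..m}" by simp
      show "\<forall>h\<in>{1..m}. A' h + B' h \<le> A h + B h" unfolding A'_def B'_def by auto
      have "0 < ?q" using q3 by linarith
      then have "0 \<in> cycI src tgt vs es \<union> cycJ src tgt vs es" unfolding cycJ_def by auto
      then have e0: "es ! 0 \<in> SI \<union> SJ" unfolding SI_def SJ_def by blast
      have "es ! 0 \<in> {1..m}" using e0 SIm SJm by blast
      moreover have "A' (es ! 0) + B' (es ! 0) < A (es ! 0) + B (es ! 0)"
      proof (cases "es ! 0 \<in> SI")
        case True
        then have p: "0 < A (es ! 0)" using posI[OF True] by linarith
        have "A' (es ! 0) < A (es ! 0)" unfolding A'_def ind_def using True p by simp
        moreover have "B' (es ! 0) \<le> B (es ! 0)" unfolding B'_def by simp
        ultimately show ?thesis by linarith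
      next
        case False
        then have J: "es ! 0 \<in> SJ" using e0 by blast
        then have p: "0 < B (es ! 0)" using negJ[OF J] by linarith
        have "B' (es ! 0) < B (es ! 0)" unfolding B'_def ind_def using J p by simp
        moreover have "A' (es ! 0) \<le> A (es ! 0)" unfolding A'_def by simp
        ultimately show ?thesis by linarith
      qed
      ultimately show "\<exists>h\<in>{1..m}. A' h + B' h < A h + B h" by blast
    qed
    have IH: "(EA m A' - EA m B' :: 'k mpoly) \<in> ideal_gen (Ering m) (Cyc n m src tgt)"
      using less.hyps[OF lt w'] .
    have fCin: "(fC src tgt vs es :: 'k mpoly) \<in> ideal_gen (Ering m) (Cyc n m src tgt)"
      by (rule ig_gen) (use cy sr_Ering[where 'k='k] in \<open>auto simp: sr_def\<close>)
    have "(EA m A - EA m B :: 'k mpoly) = EA m A' * fC src tgt vs es + EA m (ind SJ) * (EA m A' - EA m B')"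
      unfolding EA_A EA_B fCeq by (simp add: algebra_simps)
    moreover have "(EA m A' * fC src tgt vs es :: 'k mpoly) \<in> ideal_gen (Ering m) (Cyc n m src tgt)"
      by (rule ig_mult[OF sr_Ering EA_Ering fCin])
    moreover have "(EA m (ind SJ) * (EA m A' - EA m B') :: 'k mpoly) \<in> ideal_gen (Ering m) (Cyc n m src tgt)"
      by (rule ig_mult[OF sr_Ering EA_Ering IH])
    ultimately show ?thesis using ig_add[OF sr_Ering] by simp
  qed
qed



lemma Ering_add: "p \<in> Ering m \<Longrightarrow> q \<in> Ering m \<Longrightarrow> (p + q :: 'k::comm_ring_1 mpoly) \<in> Ering m"
  using sr_Ering[where 'k='k] unfolding sr_def by blast

lemma Ering_mult: "p \<in> Ering m \<Longrightarrow> q \<in> Ering m \<Longrightarrow> (p * q :: 'k::comm_ring_1 mpoly) \<in> Ering m"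
  using sr_Ering[where 'k='k] unfolding sr_def by blast

lemma Ering_diff: "p \<in> Ering m \<Longrightarrow> q \<in> Ering m \<Longrightarrow> (p - q :: 'k::comm_ring_1 mpoly) \<in> Ering m"
proof -
  assume p: "p \<in> Ering m" and q: "q \<in> Ering m"
  have "(-1 :: 'k mpoly) \<in> Ering m" using sr_Ering[where 'k='k] unfolding sr_def by blast
  then have "(-1) * q \<in> Ering m" using q by (rule Ering_mult)
  then have "p + (-1) * q \<in> Ering m" using p Ering_add by blast
  then show ?thesis by simp
qed

lemma Ering_sum: "(\<And>x. x \<in> F \<Longrightarrow> g x \<in> Ering m) \<Longrightarrow> (\<Sum>x\<in>F. g x :: 'k::comm_ring_1 mpoly) \<in> Ering m"
proof (induction F rule: infinite_finite_induct)
  case (infinite A)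
  then show ?case using sr_Ering[where 'k='k] unfolding sr_def by simp
next
  case empty
  then show ?case using sr_Ering[where 'k='k] unfolding sr_def by simp
next
  case (insert x F)
  then show ?case by (simp add: Ering_add)
qed

lemma fC_IE:
  assumes so: "simple_orientation n m src tgt" and cy: "is_cycle n m src tgt vs es"
  shows "(fC src tgt vs es :: 'k::comm_ring_1 mpoly) \<in> IE n m src tgt"
proof -
  define SI where "SI = (\<lambda>k. es ! k) ` cycI src tgt vs es"
  define SJ where "SJ = (\<lambda>k. es ! k) ` cycJ src tgt vs es"
  have fCeq: "(fC src tgt vs es :: 'k mpoly) = EA m (ind SI) - EA m (ind SJ)"
    and wIJ: "wtA m src tgt (ind SI) = wtA m src tgt (ind SJ)"
    using cycle_fC[OF so cy] unfolding SI_def SJ_def by blast+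
  have "(EA m (ind SI) - EA m (ind SJ) :: 'k mpoly) \<in> ideal_gen UNIV (toric_gens n m src tgt)"
    by (rule EA_diff_ideal[OF so wIJ])
  moreover have "(EA m (ind SI) - EA m (ind SJ) :: 'k mpoly) \<in> Ering m"
    by (rule Ering_diff[OF EA_Ering EA_Ering])
  ultimately show ?thesis unfolding IE_def fCeq by blast
qed

lemma supset:
  assumes so: "simple_orientation n m src tgt"
    and p: "p \<in> ideal_gen (Ering m) (Cyc n m src tgt)"
  shows "(p :: 'k::comm_ring_1 mpoly) \<in> IE n m src tgt"
proof -
  from p obtain F r where F: "finite F" "F \<subseteq> Cyc n m src tgt" "\<forall>s\<in>F. r s \<in> Ering m" "p = (\<Sum>s\<in>F. r s * s)"
    unfolding ideal_gen_def by blast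
  have sIE: "s \<in> IE n m src tgt" if "s \<in> F" for s
  proof -
    obtain vs es where "s = fC src tgt vs es" "is_cycle n m src tgt vs es" using F(2) \<open>s \<in> F\<close> by blast
    then show ?thesis using fC_IE[OF so] by blast
  qed
  have "p \<in> ideal_gen UNIV (toric_gens n m src tgt)"
    unfolding F(4)
  proof (rule ig_sum[OF sr_UNIV F(1)])
    fix s assume "s \<in> F"
    then have "s \<in> ideal_gen UNIV (toric_gens n m src tgt)" using sIE unfolding IE_def by blast
    then show "r s * s \<in> ideal_gen UNIV (toric_gens n m src tgt)" by (rule ig_mult[OF sr_UNIV UNIV_I])
  qed
  moreover have "p \<in> Ering m"
    unfolding F(4)
  proof (rule Ering_sum)
    fix s assume "s \<in> F"
    then show "r s * s \<in> Ering m" using sIE F(3) unfolding IE_def by (blast intro: Ering_mult)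
  qed
  ultimately show ?thesis unfolding IE_def by blast
qed

lemma single_sum: "Poly_Mapping.single k (sum f A) = (\<Sum>x\<in>A. Poly_Mapping.single k (f x))"
  by (induction A rule: infinite_finite_induct) (simp_all add: single_add)

lemma subset:
  assumes so: "simple_orientation n m src tgt" and p: "(p :: 'k::comm_ring_1 mpoly) \<in> IE n m src tgt"
  shows "p \<in> ideal_gen (Ering m) (Cyc n m src tgt)"
proof -
  let ?K = "Poly_Mapping.keys p" and ?c = "Poly_Mapping.lookup p" and ?wt = "wtfull m src tgt"
  have pE: "p \<in> Ering m" and pI: "p \<in> ideal_gen UNIV (toric_gens n m src tgt)" using p unfolding IE_def by auto
  have Lw0: "Lw m src tgt w p = 0" for w by (rule Lw_ideal[OF pI])
  have keysK: "Poly_Mapping.keys mon \<subseteq> EV ` {1..m}" if "mon \<in> ?K" for mon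
    using pE that unfolding Ering_iff by blast
  define rep where "rep w = (SOME mon. mon \<in> ?K \<and> ?wt mon = w)" for w
  have rep: "rep (?wt mon) \<in> ?K \<and> ?wt (rep (?wt mon)) = ?wt mon" if "mon \<in> ?K" for mon
    unfolding rep_def by (rule someI_ex) (use that in blast)
  have zero: "(\<Sum>mon\<in>?K. Poly_Mapping.single (rep (?wt mon)) (?c mon)) = 0"
  proof -
    have "(\<Sum>mon\<in>?K. Poly_Mapping.single (rep (?wt mon)) (?c mon))
        = (\<Sum>w\<in>?wt ` ?K. \<Sum>mon\<in>{mon. mon \<in> ?K \<and> ?wt mon = w}. Poly_Mapping.single (rep (?wt mon)) (?c mon))"
      by (rule sum.image_gen) simp
    also have "\<dots> = (\<Sum>w\<in>?wt ` ?K. \<Sum>mon\<in>{mon. mon \<in> ?K \<and> ?wt mon = w}. Poly_Mapping.single (rep w) (?c mon))"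
      by (intro sum.cong refl) auto
    also have "\<dots> = (\<Sum>w\<in>?wt ` ?K. Poly_Mapping.single (rep w) (\<Sum>mon\<in>{mon. mon \<in> ?K \<and> ?wt mon = w}. ?c mon))"
      by (simp add: single_sum)
    also have "\<dots> = (\<Sum>w\<in>?wt ` ?K. Poly_Mapping.single (rep w) (Lw m src tgt w p))"
    proof (intro sum.cong refl)
      fix w
      have "(\<Sum>mon\<in>{mon \<in> ?K. ?wt mon = w}. ?c mon) = (\<Sum>mon\<in>?K. if ?wt mon = w then ?c mon else 0)"
        by (rule sum.inter_filter) simp
      also have "\<dots> = Lw m src tgt w p" unfolding Lw_def by (intro sum.cong refl) simp
      finally show "Poly_Mapping.single (rep w) (\<Sum>mon\<in>{mon. mon \<in> ?K \<and> ?wt mon = w}. ?c mon)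
          = Poly_Mapping.single (rep w) (Lw m src tgt w p)" by simp
    qed
    also have "\<dots> = 0" by (simp add: Lw0)
    finally show ?thesis .
  qed
  have decomp: "p = (\<Sum>mon\<in>?K. Poly_Mapping.single 0 (?c mon) * (Poly_Mapping.single mon 1 - Poly_Mapping.single (rep (?wt mon)) 1))"
  proof -
    have "(\<Sum>mon\<in>?K. Poly_Mapping.single 0 (?c mon) * (Poly_Mapping.single mon 1 - Poly_Mapping.single (rep (?wt mon)) 1))
      = (\<Sum>mon\<in>?K. Poly_Mapping.single mon (?c mon)) - (\<Sum>mon\<in>?K. Poly_Mapping.single (rep (?wt mon)) (?c mon))"
      by (simp add: right_diff_distrib mult_single sum_subtractf)
    also have "\<dots> = p" using zero poly_expand[of p, symmetric] by simp
    finally show ?thesis by simp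
  qed
  have lk: "?wt mon = wtA m src tgt (\<lambda>h. Poly_Mapping.lookup mon (EV h))"
    and sg: "Poly_Mapping.single mon (1::'k) = EA m (\<lambda>h. Poly_Mapping.lookup mon (EV h))"
    if "mon \<in> ?K" for mon
  proof -
    have e: "mon = (\<Sum>h\<in>{1..m}. Poly_Mapping.single (EV h) (Poly_Mapping.lookup mon (EV h)))"
      by (rule mono_expand[OF keysK[OF that]])
    show "?wt mon = wtA m src tgt (\<lambda>h. Poly_Mapping.lookup mon (EV h))"
      by (subst e) (rule wtfull_EA)
    show "Poly_Mapping.single mon (1::'k) = EA m (\<lambda>h. Poly_Mapping.lookup mon (EV h))"
      by (rule EA_mono[OF keysK[OF that]])
  qed
  show ?thesis
  proof (subst decomp, rule ig_sum[OF sr_Ering])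
    show "finite ?K" by simp
    fix mon assume mon: "mon \<in> ?K"
    let ?mon' = "rep (?wt mon)"
    have mon': "?mon' \<in> ?K" "?wt ?mon' = ?wt mon" using rep[OF mon] by auto
    have "(Poly_Mapping.single mon 1 - Poly_Mapping.single ?mon' 1 :: 'k mpoly)
        = EA m (\<lambda>h. Poly_Mapping.lookup mon (EV h)) - EA m (\<lambda>h. Poly_Mapping.lookup ?mon' (EV h))"
      using sg[OF mon] sg[OF mon'(1)] by simp
    moreover have "wtA m src tgt (\<lambda>h. Poly_Mapping.lookup mon (EV h)) = wtA m src tgt (\<lambda>h. Poly_Mapping.lookup ?mon' (EV h))"
      using lk[OF mon] lk[OF mon'(1)] mon'(2) by simp
    ultimately have "(Poly_Mapping.single mon 1 - Poly_Mapping.single ?mon' 1 :: 'k mpoly) \<in> ideal_gen (Ering m) (Cyc n m src tgt)"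
      using core[OF so] by simp
    then show "Poly_Mapping.single 0 (?c mon) * (Poly_Mapping.single mon 1 - Poly_Mapping.single ?mon' 1) \<in> ideal_gen (Ering m) (Cyc n m src tgt)"
      by (rule ig_mult[OF sr_Ering const_Ering])
  qed
qed

theorem corollary1:
  fixes n m :: nat and src tgt :: "nat \<Rightarrow> nat"
  assumes "simple_orientation n m src tgt"
  shows "(IE n m src tgt :: 'k::field_char_0 mpoly set) =
         ideal_gen (Ering m) {fC src tgt vs es | vs es. is_cycle n m src tgt vs es}"
  using subset[OF assms] supset[OF assms] by blast

end
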